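(* Let $A$ be a real skew-symmetric $N\times N$ matrix and $B$ a real $N\times r$ matrix such that the pair $(A,B)$ is controllable, and let $K_{(A,B)}$ be the minimal non-negative integer such that $\operatorname{rank}[B,AB,\dots,A^{K_{(A,B)}}B]=N$. Then for every $\rho>0$ there exists $\kappa>0$ such that for every $T\in(0,1]$ and every $\alpha\in L^\infty([0,T],[0,1])$ with $\int_0^T\alpha(t)\,dt\ge\rho T$, $$\int_0^T\alpha(t)\|B^\top e^{tA}z_0\|^2\,dt\ge\kappa\,T^{2K_{(A,B)}+1}\|z_0\|^2\qquad\text{for all }z_0\in\mathbb{R}^N,$$ i.e. $\alpha$ is of class $\mathcal{K}(A,B,T,\kappa T^{2K_{(A,B)}+1})$.
   Context: Norms are Euclidean norms. For $T>0$, $c>0$, a function $\alpha\in L^\infty([0,T],[0,1])$ is of class $\mathcal{K}(A,B,T,c)$ if $\int_0^T\alpha(t)\|B^\top e^{tA}z_0\|^2\,dt\ge c\|z_0\|^2$ for all $z_0\in\mathbb{R}^N$. Controllability of $(A,B)$ means $\operatorname{rank}[B,AB,\dots,A^{N-1}B]=N$. *)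

theory Defs
  imports "HOL-Analysis.Analysis"
begin

definition mat_pow :: "real^'n^'n \<Rightarrow> nat \<Rightarrow> real^'n^'n" where
  "mat_pow A k = ((\<lambda>M. A ** M) ^^ k) (mat 1)"

definition mat_exp :: "real^'n^'n \<Rightarrow> real^'n^'n" where
  "mat_exp M = (\<Sum>k. (1 / (fact k :: real)) *\<^sub>R mat_pow M k)"

(* rank of the block matrix [B, AB, ..., A^K B] = dimension of its column space *)
definition ctrb_rank :: "real^'n^'n \<Rightarrow> real^'r^'n \<Rightarrow> nat \<Rightarrow> nat" where
  "ctrb_rank A B K = dim (span (\<Union>k\<in>{0..K}. columns (mat_pow A k ** B)))"

definition controllable :: "real^'n^'n \<Rightarrow> real^'r^'n \<Rightarrow> bool" where
  "controllable A B \<longleftrightarrow> ctrb_rank A B (CARD('n) - 1) = CARD('n)"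

definition Kalman_index :: "real^'n^'n \<Rightarrow> real^'r^'n \<Rightarrow> nat" where
  "Kalman_index A B = (LEAST K. ctrb_rank A B K = CARD('n))"

(* alpha \<in> L^\<infinity>([0,T],[0,1]) (represented by a measurable representative with values in [0,1]) *)
definition Linf01 :: "real \<Rightarrow> (real \<Rightarrow> real) \<Rightarrow> bool" where
  "Linf01 T \<alpha> \<longleftrightarrow> \<alpha> measurable_on {0..T} \<and> (\<forall>t\<in>{0..T}. 0 \<le> \<alpha> t \<and> \<alpha> t \<le> 1)"

definition class_K :: "real^'n^'n \<Rightarrow> real^'r^'n \<Rightarrow> real \<Rightarrow> real \<Rightarrow> (real \<Rightarrow> real) \<Rightarrow> bool" where
  "class_K A B T c \<alpha> \<longleftrightarrow> Linf01 T \<alpha> \<and>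
     (\<forall>z0::real^'n. integral {0..T} (\<lambda>t. \<alpha> t * (norm (transpose B *v (mat_exp (t *\<^sub>R A) *v z0)))\<^sup>2)
        \<ge> c * (norm z0)\<^sup>2)"

end

theory Submission
  imports Defs "HOL-Computational_Algebra.Polynomial"
begin
lemma mat_pow_0[simp]: "mat_pow A 0 = mat 1" by (simp add: mat_pow_def)
lemma mat_pow_Suc: "mat_pow A (Suc k) = A ** mat_pow A k" by (simp add: mat_pow_def)

lemma mat_pow_scale: "mat_pow (t *\<^sub>R A) k = (t^k) *\<^sub>R mat_pow A k"
proof (induction k)
  case 0 then show ?case by simp
next
  case (Suc k)
  have "mat_pow (t *\<^sub>R A) (Suc k) = (t *\<^sub>R A) ** ((t^k) *\<^sub>R mat_pow A k)"
    by (simp add: mat_pow_Suc Suc)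
  also have "\<dots> = (t^Suc k) *\<^sub>R (A ** mat_pow A k)"
    by (simp add: matrix_scalar_ac vec_eq_iff matrix_matrix_mult_def sum_distrib_left algebra_simps)
  finally show ?case by (simp add: mat_pow_Suc)
qed

lemma mat_pow_comm: "mat_pow A k *v (A *v v) = A *v (mat_pow A k *v v)"
proof (induction k)
  case 0 then show ?case by simp
next
  case (Suc k)
  then show ?case by (simp add: mat_pow_Suc matrix_vector_mul_assoc[symmetric])
qed

lemma mat_pow_Suc_v: "mat_pow A (Suc k) *v v = A *v (mat_pow A k *v v)"
  by (simp add: mat_pow_Suc matrix_vector_mul_assoc[symmetric])

lemma mat_pow_Suc_v': "mat_pow A (Suc k) *v v = mat_pow A k *v (A *v v)"
  by (simp add: mat_pow_Suc_v mat_pow_comm)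

lemma mat_norm_bound: "\<exists>c>0. \<forall>v. norm ((A::real^'n^'n) *v v) \<le> norm v * c"
  using bounded_linear.pos_bounded[OF matrix_vector_mul_bounded_linear] by blast

lemma matmul_norm_bound: "\<exists>c>0. \<forall>M::real^'n^'n. norm ((A::real^'n^'n) ** M) \<le> norm M * c"
proof -
  have "linear (\<lambda>M::real^'n^'n. A ** M)"
    by (rule linearI) (simp_all add: matrix_add_ldistrib vec_eq_iff matrix_matrix_mult_def sum_distrib_left sum.distrib algebra_simps)
  then have "bounded_linear (\<lambda>M::real^'n^'n. A ** M)" by (simp add: linear_conv_bounded_linear)
  then show ?thesis using bounded_linear.pos_bounded by blast
qed

lemma mat_pow_v_bound:
  assumes "\<forall>v. norm ((A::real^'n^'n) *v v) \<le> norm v * c" "c \<ge> 0"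
  shows "norm (mat_pow A k *v v) \<le> c^k * norm v"
proof (induction k)
  case 0 then show ?case by simp
next
  case (Suc k)
  have "norm (mat_pow A (Suc k) *v v) \<le> norm (mat_pow A k *v v) * c"
    using assms(1) by (simp add: mat_pow_Suc_v)
  also have "\<dots> \<le> c^k * norm v * c" using Suc assms(2) by (simp add: mult_right_mono)
  finally show ?case by (simp add: algebra_simps)
qed

lemma mat_pow_norm_bound:
  assumes "\<forall>M::real^'n^'n. norm ((A::real^'n^'n) ** M) \<le> norm M * c" "c \<ge> 0"
  shows "norm (mat_pow A k) \<le> c^k * norm (mat 1 :: real^'n^'n)"
proof (induction k)
  case 0 then show ?case by simp
next
  case (Suc k)
  have "norm (mat_pow A (Suc k)) \<le> norm (mat_pow A k) * c"
    using assms(1) by (simp add: mat_pow_Suc)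
  also have "\<dots> \<le> c^k * norm (mat 1 :: real^'n^'n) * c" using Suc assms(2) by (simp add: mult_right_mono)
  finally show ?case by (simp add: algebra_simps)
qed

lemma summable_exp_bound:
  fixes f :: "nat \<Rightarrow> 'a::banach"
  assumes "\<And>k. norm (f k) \<le> C * c^k / fact k"
  shows "summable f"
proof (rule summable_comparison_test)
  show "\<exists>N. \<forall>n\<ge>N. norm (f n) \<le> C * (inverse (fact n) * c ^ n)"
    using assms by (auto simp: field_simps)
  show "summable (\<lambda>n. C * (inverse (fact n) * c ^ n))"
    by (intro summable_mult summable_exp)
qed

lemma scaleR_mv: "((c::real) *\<^sub>R (M::real^'n^'m)) *v v = c *\<^sub>R (M *v v)"
  by (simp add: vec_eq_iff matrix_vector_mult_def sum_distrib_left algebra_simps vector_scaleR_component scaleR_sum_right mult.assoc)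

definition U :: "real^'n^'n \<Rightarrow> real^'n \<Rightarrow> real \<Rightarrow> real^'n" where
  "U A z t = (\<Sum>k. (t^k / fact k) *\<^sub>R (mat_pow A k *v z))"

lemma summable_U: "summable (\<lambda>k. (t^k / fact k) *\<^sub>R (mat_pow (A::real^'n^'n) k *v z))"
proof -
  obtain c where c: "c > 0" "\<forall>v. norm (A *v v) \<le> norm v * c" using mat_norm_bound by blast
  show ?thesis
  proof (rule summable_exp_bound[where C="norm z" and c="\<bar>t\<bar> * c"])
    fix k
    have "norm ((t^k / fact k) *\<^sub>R (mat_pow A k *v z)) = \<bar>t\<bar>^k / fact k * norm (mat_pow A k *v z)"
      by (simp add: power_abs)
    also have "\<dots> \<le> \<bar>t\<bar>^k / fact k * (c^k * norm z)"
      using mat_pow_v_bound[OF c(2)] c(1) by (intro mult_left_mono) auto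
    finally show "norm ((t^k / fact k) *\<^sub>R (mat_pow A k *v z)) \<le> norm z * (\<bar>t\<bar> * c)^k / fact k"
      by (simp add: power_mult_distrib field_simps)
  qed
qed

lemma mat_exp_U: fixes A :: "real^'n^'n" shows "mat_exp (t *\<^sub>R A) *v z = U A z t"
proof -
  obtain c where c: "c > 0" "\<forall>M::real^'n^'n. norm (A ** M) \<le> norm M * c" using matmul_norm_bound by blast
  have eq: "(\<lambda>k. (1 / fact k) *\<^sub>R mat_pow (t *\<^sub>R A) k) = (\<lambda>k. (t^k / fact k) *\<^sub>R mat_pow A k)"
    by (simp add: mat_pow_scale)
  have sm: "summable (\<lambda>k. (t^k / fact k) *\<^sub>R mat_pow A k)"
  proof (rule summable_exp_bound[where C="norm (mat 1 :: real^'n^'n)" and c="\<bar>t\<bar> * c"])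
    fix k
    have "norm ((t^k / fact k) *\<^sub>R mat_pow A k) = \<bar>t\<bar>^k / fact k * norm (mat_pow A k)"
      by (simp add: power_abs)
    also have "\<dots> \<le> \<bar>t\<bar>^k / fact k * (c^k * norm (mat 1 :: real^'n^'n))"
      using mat_pow_norm_bound[OF c(2)] c(1) by (intro mult_left_mono) auto
    finally show "norm ((t^k / fact k) *\<^sub>R mat_pow A k) \<le> norm (mat 1 :: real^'n^'n) * (\<bar>t\<bar> * c)^k / fact k"
      by (simp add: power_mult_distrib field_simps)
  qed
  have bl: "bounded_linear (\<lambda>M::real^'n^'n. M *v z)"
  proof -
    have "linear (\<lambda>M::real^'n^'n. M *v z)"
      by (rule linearI) (simp_all add: matrix_vector_mult_add_rdistrib vec_eq_iff matrix_vector_mult_def sum_distrib_left sum.distrib algebra_simps)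
    then show ?thesis by (simp add: linear_conv_bounded_linear)
  qed
  have "mat_exp (t *\<^sub>R A) *v z = (\<Sum>k. ((t^k / fact k) *\<^sub>R mat_pow A k) *v z)"
    unfolding mat_exp_def eq by (rule bounded_linear.suminf[OF bl sm])
  also have "\<dots> = U A z t"
    unfolding U_def by (simp only: scaleR_mv)
  finally show ?thesis .
qed

lemma U_0: "U A z 0 = z"
proof -
  have "(\<lambda>k. (0^k / fact k) *\<^sub>R (mat_pow A k *v z)) = (\<lambda>k. if k = 0 then (mat_pow A k *v z) else 0)"
    by (auto simp: fun_eq_iff)
  then show ?thesis unfolding U_def using sums_single[of 0 "\<lambda>k. mat_pow A k *v z"]
    by (simp add: sums_iff)
qed

lemma U_comp: "U A z t $ j = (\<Sum>k. ((mat_pow A k *v z) $ j / fact k) * t^k)"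
proof -
  have "U A z t $ j = (\<Sum>k. ((t^k / fact k) *\<^sub>R (mat_pow A k *v z)) $ j)"
    unfolding U_def by (rule bounded_linear.suminf[OF bounded_linear_vec_nth summable_U])
  then show ?thesis by (simp add: ac_simps)
qed

lemma summable_U_comp: "summable (\<lambda>k. ((mat_pow A k *v z) $ j / fact k) * t^k)"
proof -
  have "summable (\<lambda>k. ((t^k / fact k) *\<^sub>R (mat_pow A k *v z)) $ j)"
    by (rule bounded_linear.summable[OF bounded_linear_vec_nth summable_U])
  then show ?thesis by (simp add: ac_simps)
qed

lemma U_lin: "U A (A *v z) t = A *v U A z t"
proof -
  have "A *v U A z t = (\<Sum>k. A *v ((t^k / fact k) *\<^sub>R (mat_pow A k *v z)))"
    unfolding U_def by (rule bounded_linear.suminf[OF matrix_vector_mul_bounded_linear summable_U])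
  also have "\<dots> = U A (A *v z) t"
    unfolding U_def by (simp add: mat_pow_comm matrix_vector_mult_scaleR)
  finally show ?thesis by simp
qed

lemma U_pow: "U A (mat_pow A m *v z) t = mat_pow A m *v U A z t"
proof (induction m)
  case 0 then show ?case by simp
next
  case (Suc m)
  then show ?case by (simp add: mat_pow_Suc_v U_lin)
qed

lemma U_comp_deriv: "((\<lambda>t. U A z t $ j) has_real_derivative (U A (A *v z) t $ j)) (at t)"
proof -
  define c where "c k = (mat_pow A k *v z) $ j / fact k" for k
  have d: "diffs c = (\<lambda>k. (mat_pow A k *v (A *v z)) $ j / fact k)"
  proof (rule ext)
    fix k
    have "fact (Suc k) = (real (Suc k)) * fact k" by simp
    then show "diffs c k = (mat_pow A k *v (A *v z)) $ j / fact k"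
      unfolding diffs_def c_def mat_pow_Suc_v' by (simp del: of_nat_Suc fact_Suc)
  qed
  have "((\<lambda>t. \<Sum>k. c k * t^k) has_real_derivative (\<Sum>k. diffs c k * t^k)) (at t)"
    by (rule termdiffs_strong_converges_everywhere) (unfold c_def, rule summable_U_comp)
  then show ?thesis unfolding U_comp d by (simp add: c_def)
qed

lemma U_inner_deriv: "((\<lambda>t. w \<bullet> U A z t) has_real_derivative (w \<bullet> U A (A *v z) t)) (at t)"
  unfolding inner_vec_def
  by (rule DERIV_sum) (auto intro!: derivative_eq_intros U_comp_deriv)

lemma skew_inner: assumes "transpose A = - (A::real^'n^'n)" shows "x \<bullet> (A *v x) = 0"
proof -
  have neg: "(-A) *v x = -(A *v x)" by (simp add: vec_eq_iff matrix_vector_mult_def sum_negf)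
  have "x \<bullet> (A *v x) = (x v* A) \<bullet> x" by (rule dot_lmul_matrix[symmetric])
  also have "\<dots> = (transpose A *v x) \<bullet> x" by (simp add: transpose_matrix_vector)
  also have "\<dots> = - (x \<bullet> (A *v x))" using assms neg by (simp add: inner_commute)
  finally show ?thesis by simp
qed

lemma U_norm: assumes "transpose A = - (A::real^'n^'n)" shows "norm (U A z t) = norm z"
proof -
  have d: "((\<lambda>t. U A z t \<bullet> U A z t) has_real_derivative 0) (at t)" for t
  proof -
    have "((\<lambda>t. \<Sum>i\<in>UNIV. U A z t $ i * U A z t $ i) has_real_derivative
        (\<Sum>i\<in>UNIV. U A (A *v z) t $ i * U A z t $ i + U A z t $ i * U A (A *v z) t $ i)) (at t)"
      by (rule DERIV_sum) (auto intro!: derivative_eq_intros U_comp_deriv)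
    moreover have "(\<Sum>i\<in>UNIV. U A (A *v z) t $ i * U A z t $ i + U A z t $ i * U A (A *v z) t $ i)
        = 2 * (U A z t \<bullet> (A *v U A z t))"
      by (simp add: inner_vec_def U_lin sum.distrib[symmetric] sum_distrib_left algebra_simps)
    ultimately show ?thesis using skew_inner[OF assms] by (simp add: inner_vec_def)
  qed
  have "U A z t \<bullet> U A z t = U A z 0 \<bullet> U A z 0"
    by (rule DERIV_isconst_all) (use d in auto)
  then have "(norm (U A z t))^2 = (norm z)^2" by (simp add: power2_norm_eq_inner U_0)
  then show ?thesis by (simp add: power2_eq_iff_nonneg)
qed

lemma gaps_mono:
  assumes "\<forall>l<Suc m. (s::nat\<Rightarrow>real) l + \<delta> \<le> s (Suc l)" "\<delta> > 0" "l < Suc m"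
  shows "s 0 + \<delta> \<le> s (Suc l)"
  using assms(3)
proof (induction l)
  case 0 then show ?case using assms by auto
next
  case (Suc l)
  then have "s 0 + \<delta> \<le> s (Suc l)" by auto
  also have "\<dots> \<le> s (Suc (Suc l))" using assms(1,2) Suc(2) by force
  finally show ?case .
qed

lemma poly_coeff_bound:
  fixes p :: "real poly"
  assumes "degree p \<le> m" "0 < \<delta>" "\<delta> \<le> 1"
    "\<forall>l\<le>m. 0 \<le> s l \<and> s l \<le> 1" "\<forall>l<m. s l + \<delta> \<le> s (Suc l)"
    "\<forall>l\<le>m. \<bar>poly p (s l)\<bar> \<le> \<epsilon>"
  shows "\<bar>coeff p k\<bar> \<le> 5^m / \<delta>^m * \<epsilon>"
  using assms
proof (induction m arbitrary: p s \<epsilon> k)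
  case 0
  then have e: "\<bar>poly p (s 0)\<bar> \<le> \<epsilon>" by auto
  from 0 have "p = [:coeff p 0:]" by (metis degree_0_id le_zero_eq)
  moreover have "poly [:coeff p 0:] (s 0) = coeff p 0" by simp
  ultimately have "poly p (s 0) = coeff p 0" by metis
  show ?case
  proof (cases "k = 0")
    case True then show ?thesis using e \<open>poly p (s 0) = coeff p 0\<close> by simp
  next
    case False
    then have "coeff p k = 0" using 0 by (intro coeff_eq_0) auto
    then show ?thesis using e by simp
  qed
next
  case (Suc m)
  define a where "a = s 0"
  define c where "c = poly p a"
  have e0: "\<epsilon> \<ge> 0" using Suc.prems(6) by (meson abs_ge_zero order.trans le0)
  have "poly (p - [:c:]) a = 0" by (simp add: c_def)
  then have "[:-a,1:] dvd (p - [:c:])" by (simp only: poly_eq_0_iff_dvd)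
  then obtain q where q: "p - [:c:] = [:-a,1:] * q" by (elim dvdE)
  have dq: "degree q \<le> m"
  proof (cases "q = 0")
    case True then show ?thesis by simp
  next
    case False
    have "degree (p - [:c:]) \<le> Suc m"
      using Suc.prems(1) by (intro degree_diff_le) auto
    moreover have "degree ([:-a,1:] * q) = Suc (degree q)"
      using False by (subst degree_mult_eq) auto
    ultimately show ?thesis using q by simp
  qed
  define s' where "s' l = s (Suc l)" for l
  have pq: "poly p x = c + (x - a) * poly q x" for x
  proof -
    have "poly (p - [:c:]) x = poly ([:-a,1:] * q) x" using q by simp
    then show ?thesis by (simp add: algebra_simps)
  qed
  have qb: "\<forall>l\<le>m. \<bar>poly q (s' l)\<bar> \<le> 2 * \<epsilon> / \<delta>"
  proof (intro allI impI)
    fix l assume l: "l \<le> m"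
    have gap: "a + \<delta> \<le> s' l" unfolding a_def s'_def
      using gaps_mono[of m s \<delta> l] Suc.prems l by auto
    have h1: "\<bar>poly p (s (Suc l))\<bar> \<le> \<epsilon>" using Suc.prems(6) l by auto
    have h2: "\<bar>poly p (s 0)\<bar> \<le> \<epsilon>" using Suc.prems(6) by auto
    have "\<bar>poly p (s' l) - c\<bar> \<le> 2 * \<epsilon>"
      using h1 h2 unfolding s'_def c_def a_def by linarith
    then have "\<bar>s' l - a\<bar> * \<bar>poly q (s' l)\<bar> \<le> 2 * \<epsilon>" using pq by (simp add: abs_mult)
    moreover have "\<bar>s' l - a\<bar> \<ge> \<delta>" using gap by simp
    moreover have "\<delta> * \<bar>poly q (s' l)\<bar> \<le> \<bar>s' l - a\<bar> * \<bar>poly q (s' l)\<bar>"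
      using \<open>\<bar>s' l - a\<bar> \<ge> \<delta>\<close> by (rule mult_right_mono) simp
    ultimately have "\<delta> * \<bar>poly q (s' l)\<bar> \<le> 2 * \<epsilon>" by linarith
    then show "\<bar>poly q (s' l)\<bar> \<le> 2 * \<epsilon> / \<delta>" using Suc.prems(2) by (simp add: field_simps)
  qed
  have IH: "\<bar>coeff q j\<bar> \<le> 5^m / \<delta>^m * (2 * \<epsilon> / \<delta>)" for j
    by (rule Suc.IH[OF dq Suc.prems(2,3) _ _ qb]) (use Suc.prems(4,5) in \<open>auto simp: s'_def\<close>)
  define Q where "Q = 5^m / \<delta>^m * (2 * \<epsilon> / \<delta>)"
  have Q0: "Q \<ge> 0" using e0 Suc.prems(2) by (simp add: Q_def)
  have cp: "coeff p k = (if k = 0 then c else 0) + (- a) * coeff q k + (case k of 0 \<Rightarrow> 0 | Suc j \<Rightarrow> coeff q j)"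
  proof -
    have "p = [:c:] + [:-a,1:] * q" using q by (simp add: algebra_simps)
    also have "[:-a,1:] * q = smult (-a) q + pCons 0 q" by (simp add: mult_pCons_left)
    finally have "p = [:c:] + (smult (-a) q + pCons 0 q)" .
    then show ?thesis by (simp add: coeff_pCons split: nat.splits)
  qed
  have ca: "\<bar>c\<bar> \<le> \<epsilon>" using Suc.prems(6) by (simp add: c_def a_def)
  have a01: "\<bar>a\<bar> \<le> 1" using Suc.prems(4) by (auto simp: a_def)
  have t1: "\<bar>(- a) * coeff q k\<bar> \<le> Q"
  proof -
    have "\<bar>a\<bar> * \<bar>coeff q k\<bar> \<le> 1 * \<bar>coeff q k\<bar>" using a01 by (rule mult_right_mono) simp
    then show ?thesis using IH[of k] unfolding Q_def abs_mult abs_minus by linarith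
  qed
  have t2: "\<bar>case k of 0 \<Rightarrow> 0 | Suc j \<Rightarrow> coeff q j\<bar> \<le> Q"
    using IH Q0 unfolding Q_def by (cases k) auto
  have "\<bar>coeff p k\<bar> \<le> \<epsilon> + 2 * Q"
    unfolding cp using ca t1 t2 by (cases "k = 0") (auto simp: abs_if split: if_splits)
  also have "\<dots> \<le> 5^Suc m / \<delta>^Suc m * \<epsilon>"
  proof -
    have d1: "\<delta>^Suc m \<le> 1" using Suc.prems(2,3) by (intro power_le_one) auto
    have dp: "\<delta>^Suc m > 0" using Suc.prems(2) by simp
    define X where "X = 5^m / \<delta>^Suc m * \<epsilon>"
    have "\<epsilon> \<le> X" unfolding X_def
    proof -
      have f1: "(1::real) \<le> 5^m" by (rule one_le_power) simp
      have "\<delta>^Suc m \<le> 5^m" using d1 f1 by linarith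
      then have "1 \<le> 5^m / \<delta>^Suc m" using dp by (simp add: le_divide_eq del: power_Suc)
      from mult_right_mono[OF this e0] show "\<epsilon> \<le> 5^m / \<delta>^Suc m * \<epsilon>" by simp
    qed
    moreover have "2 * Q = 4 * X" by (simp add: X_def Q_def field_simps)
    moreover have "5^Suc m / \<delta>^Suc m * \<epsilon> = 5 * X" unfolding X_def
      by (simp del: power_Suc add: power_Suc[of "5::real"])
    ultimately show ?thesis by linarith
  qed
  finally show ?case .
qed

lemma sum_coeff_bound:
  fixes c :: "nat \<Rightarrow> real"
  assumes "0 < \<delta>" "\<delta> \<le> 1"
    "\<forall>l\<le>m. 0 \<le> s l \<and> s l \<le> 1" "\<forall>l<m. s l + \<delta> \<le> s (Suc l)"
    "\<forall>l\<le>m. \<bar>\<Sum>k\<le>m. c k * s l ^ k\<bar> \<le> \<epsilon>" "k \<le> m"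
  shows "\<bar>c k\<bar> \<le> 5^m / \<delta>^m * \<epsilon>"
proof -
  define p where "p = (\<Sum>k\<le>m. monom (c k) k)"
  have "degree p \<le> m" unfolding p_def
    by (rule degree_sum_le) (auto intro: order.trans[OF degree_monom_le])
  moreover have "poly p x = (\<Sum>k\<le>m. c k * x ^ k)" for x
    by (simp add: p_def poly_sum poly_monom)
  moreover have "coeff p k = c k" using assms(6)
    by (simp add: p_def coeff_sum coeff_monom)
  ultimately show ?thesis using poly_coeff_bound[of p m \<delta> s \<epsilon> k] assms by auto
qed

lemma kalman_span:
  fixes A :: "real^'n^'n" and B :: "real^'r^'n"
  assumes "controllable A B"
  shows "span (\<Union>k\<in>{0..Kalman_index A B}. columns (mat_pow A k ** B)) = UNIV"
proof -
  have "ctrb_rank A B (Kalman_index A B) = CARD('n)"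
    unfolding Kalman_index_def using assms unfolding controllable_def by (rule LeastI)
  then show ?thesis unfolding ctrb_rank_def dim_span by (simp add: dim_eq_full[symmetric])
qed

lemma inner_transpose: "w \<bullet> (A *v y) = (transpose A *v w) \<bullet> (y::real^'n)"
  by (simp add: transpose_matrix_vector dot_lmul_matrix)

lemma inner_pow_skew:
  fixes A :: "real^'n^'n"
  assumes skew: "transpose A = - A"
  shows "w \<bullet> (mat_pow A k *v x) = (-1)^k * ((mat_pow A k *v w) \<bullet> x)"
proof (induction k arbitrary: w)
  case 0 then show ?case by simp
next
  case (Suc k)
  have neg: "(-A) *v w = -(A *v w)" by (simp add: vec_eq_iff matrix_vector_mult_def sum_negf)
  have "w \<bullet> (mat_pow A (Suc k) *v x) = w \<bullet> (A *v (mat_pow A k *v x))" by (simp add: mat_pow_Suc_v)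
  also have "\<dots> = (transpose A *v w) \<bullet> (mat_pow A k *v x)" by (rule inner_transpose)
  also have "\<dots> = - ((A *v w) \<bullet> (mat_pow A k *v x))" using skew neg by simp
  also have "\<dots> = - ((-1)^k * ((mat_pow A k *v (A *v w)) \<bullet> x))" using Suc by simp
  also have "\<dots> = (-1)^Suc k * ((mat_pow A (Suc k) *v w) \<bullet> x)" by (simp add: mat_pow_Suc_v')
  finally show ?case .
qed

lemma column_mult: "column j (M ** (B::real^'r^'n)) = (M::real^'n^'n) *v column j B"
  by (simp add: vec_eq_iff matrix_matrix_mult_def matrix_vector_mult_def column_def)

definition Phi :: "real^'n^'n \<Rightarrow> real^'r^'n \<Rightarrow> nat \<Rightarrow> real^'n \<Rightarrow> real" where
  "Phi A B K x = (\<Sum>k\<le>K. \<Sum>j\<in>UNIV. \<bar>column j B \<bullet> (mat_pow A k *v x)\<bar>)"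

lemma Phi_pos:
  fixes A :: "real^'n^'n" and B :: "real^'r^'n"
  assumes skew: "transpose A = - A" and ctrl: "controllable A B" and x: "x \<noteq> 0"
  shows "Phi A B (Kalman_index A B) x > 0"
proof (rule ccontr)
  let ?K = "Kalman_index A B"
  assume "\<not> ?thesis"
  then have "Phi A B ?K x = 0" unfolding Phi_def by (smt (verit) abs_ge_zero sum_nonneg)
  then have z: "\<forall>k\<le>?K. \<forall>j. column j B \<bullet> (mat_pow A k *v x) = 0"
    unfolding Phi_def by (subst (asm) sum_nonneg_eq_0_iff) (auto simp: sum_nonneg_eq_0_iff)
  have orth: "orthogonal x y" if "y \<in> (\<Union>k\<in>{0..?K}. columns (mat_pow A k ** B))" for y
  proof -
    from that obtain k j where k: "k \<le> ?K" and y: "y = column j (mat_pow A k ** B)"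
      by (auto simp: columns_def)
    have "column j B \<bullet> (mat_pow A k *v x) = (-1)^k * ((mat_pow A k *v column j B) \<bullet> x)"
      by (rule inner_pow_skew[OF skew])
    then have "(mat_pow A k *v column j B) \<bullet> x = 0" using z k by simp
    then show ?thesis unfolding orthogonal_def y column_mult by (simp add: inner_commute)
  qed
  have "orthogonal x x"
    by (rule orthogonal_to_span[where S="\<Union>k\<in>{0..?K}. columns (mat_pow A k ** B)", OF _ orth]) (simp_all add: kalman_span[OF ctrl])
  then show False using x by (simp add: orthogonal_def)
qed

lemma Phi_scale: "Phi A B K (c *\<^sub>R x) = \<bar>c\<bar> * Phi A B K x"
  by (simp add: Phi_def matrix_vector_mult_scaleR abs_mult sum_distrib_left)

lemma Phi_cont: "continuous_on S (Phi A B K)"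
  unfolding Phi_def
  by (intro continuous_intros bounded_linear.continuous_on[OF matrix_vector_mul_bounded_linear])

lemma Phi_lower:
  fixes A :: "real^'n^'n" and B :: "real^'r^'n"
  assumes skew: "transpose A = - A" and ctrl: "controllable A B"
  shows "\<exists>c0>0. \<forall>x. c0 * norm x \<le> Phi A B (Kalman_index A B) x"
proof -
  let ?K = "Kalman_index A B"
  have ne: "sphere (0::real^'n) 1 \<noteq> {}" by simp
  obtain x0 where x0: "x0 \<in> sphere 0 1" "\<forall>y\<in>sphere 0 1. Phi A B ?K x0 \<le> Phi A B ?K y"
    using continuous_attains_inf[OF compact_sphere ne Phi_cont] by blast
  have "x0 \<noteq> 0" using x0(1) by auto
  then have pos: "Phi A B ?K x0 > 0" by (rule Phi_pos[OF skew ctrl])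
  show ?thesis
  proof (intro exI[of _ "Phi A B ?K x0"] conjI allI pos)
    fix x :: "real^'n"
    show "Phi A B ?K x0 * norm x \<le> Phi A B ?K x"
    proof (cases "x = 0")
      case True then show ?thesis by (simp add: Phi_def)
    next
      case False
      have "(1 / norm x) *\<^sub>R x \<in> sphere 0 1" using False by simp
      then have "Phi A B ?K x0 \<le> Phi A B ?K ((1 / norm x) *\<^sub>R x)" using x0(2) by blast
      also have "\<dots> = Phi A B ?K x / norm x" by (simp add: Phi_scale)
      finally show ?thesis using False by (simp add: field_simps)
    qed
  qed
qed

lemma taylor_bound:
  fixes A :: "real^'n^'n"
  assumes skew: "transpose A = - A" and h: "0 \<le> h"
  shows "\<bar>w \<bullet> U A z (a + h) - (\<Sum>k\<le>K. (w \<bullet> (mat_pow A k *v U A z a)) / fact k * h^k)\<bar>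
          \<le> h^Suc K / fact (Suc K) * (norm w * norm (mat_pow A (Suc K) *v z))"
proof (cases "h = 0")
  case True
  have "(\<Sum>k\<le>K. (w \<bullet> (mat_pow A k *v U A z a)) / fact k * 0^k) = w \<bullet> U A z a"
    by (simp add: power_0_left sum.atMost_shift)
  then show ?thesis using True by simp
next
  case False
  define diff where "diff m t = w \<bullet> U A (mat_pow A m *v z) t" for m t
  have d0: "diff 0 = (\<lambda>t. w \<bullet> U A z t)" by (simp add: diff_def fun_eq_iff)
  have dd: "\<forall>m t. m < Suc K \<and> a \<le> t \<and> t \<le> a + h \<longrightarrow> DERIV (diff m) t :> diff (Suc m) t"
    unfolding diff_def by (auto simp: mat_pow_Suc_v intro: U_inner_deriv)
  obtain t where t: "a < t" "t < a + h"
    "w \<bullet> U A z (a + h) = (\<Sum>m<Suc K. (diff m a / fact m) * (a + h - a)^m) + (diff (Suc K) t / fact (Suc K)) * (a + h - a)^Suc K"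
    using Taylor_up[of "Suc K" diff "\<lambda>t. w \<bullet> U A z t" a "a + h" a, OF _ d0 dd] False h by auto
  have sumeq: "(\<Sum>m<Suc K. (diff m a / fact m) * (a + h - a)^m) = (\<Sum>k\<le>K. (w \<bullet> (mat_pow A k *v U A z a)) / fact k * h^k)"
    by (simp add: lessThan_Suc_atMost diff_def U_pow)
  have "\<bar>diff (Suc K) t\<bar> \<le> norm w * norm (U A (mat_pow A (Suc K) *v z) t)"
    unfolding diff_def by (rule Cauchy_Schwarz_ineq2)
  also have "\<dots> = norm w * norm (mat_pow A (Suc K) *v z)" by (simp add: U_norm[OF skew])
  finally have db: "\<bar>diff (Suc K) t\<bar> \<le> norm w * norm (mat_pow A (Suc K) *v z)" .
  have "\<bar>w \<bullet> U A z (a + h) - (\<Sum>k\<le>K. (w \<bullet> (mat_pow A k *v U A z a)) / fact k * h^k)\<bar>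
      = \<bar>diff (Suc K) t\<bar> / fact (Suc K) * h^Suc K"
    using t(3) sumeq h by (simp add: abs_mult)
  also have "\<dots> \<le> (norm w * norm (mat_pow A (Suc K) *v z)) / fact (Suc K) * h^Suc K"
    using db h by (intro mult_right_mono divide_right_mono) auto
  finally show ?thesis by (simp add: field_simps)
qed

lemma local_bad:
  fixes A :: "real^'n^'n" and B :: "real^'r^'n" and z :: "real^'n"
  assumes skew: "transpose A = - A"
    and c0: "\<forall>x. c0 * norm x \<le> Phi A B K x"
    and Cb: "\<forall>j v. norm (column j B) * norm (mat_pow A (Suc K) *v v) \<le> Cb * norm v"
    and dpos: "0 < \<delta>" "\<delta> \<le> 1"
    and tau: "0 < \<tau>" "\<tau> \<le> 1"
    and ineq: "real (Suc K) * real CARD('r) * (fact K * (5^K / \<delta>^K * (\<eta> + Cb * \<tau>))) < c0"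
    and z: "z \<noteq> 0"
    and s: "\<forall>l\<le>K. 0 \<le> s l \<and> s l \<le> 1" "\<forall>l<K. s l + \<delta> \<le> s (Suc l)"
    and bad: "\<forall>l\<le>K. \<forall>j. \<bar>column j B \<bullet> U A z (a + \<tau> * s l)\<bar> \<le> \<eta> * \<tau>^K * norm z"
  shows False
proof -
  define x where "x = U A z a"
  have nx: "norm x = norm z" by (simp add: x_def U_norm[OF skew])
  define D where "D = 5^K / \<delta>^K * (\<eta> + Cb * \<tau>) * norm z"
  have each: "\<bar>column j B \<bullet> (mat_pow A k *v x)\<bar> \<le> fact K * D" if k: "k \<le> K" for j k
  proof -
    let ?b = "column j B"
    define c where "c i = (?b \<bullet> (mat_pow A i *v x)) / fact i * \<tau>^i" for i
    have poly: "\<bar>\<Sum>i\<le>K. c i * s l ^ i\<bar> \<le> (\<eta> * \<tau>^K + Cb * \<tau>^Suc K) * norm z" if l: "l \<le> K" for l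
    proof -
      have h0: "0 \<le> \<tau> * s l" using s(1) l tau by auto
      have h1: "\<tau> * s l \<le> \<tau>" using s(1) l tau by (simp add: mult_left_le)
      have tb: "\<bar>?b \<bullet> U A z (a + \<tau> * s l) - (\<Sum>i\<le>K. (?b \<bullet> (mat_pow A i *v x)) / fact i * (\<tau> * s l)^i)\<bar>
          \<le> (\<tau> * s l)^Suc K / fact (Suc K) * (norm ?b * norm (mat_pow A (Suc K) *v z))"
        unfolding x_def by (rule taylor_bound[OF skew h0])
      have "(\<tau> * s l)^Suc K / fact (Suc K) * (norm ?b * norm (mat_pow A (Suc K) *v z))
          \<le> \<tau>^Suc K * (Cb * norm z)"
      proof -
        have p1: "(\<tau> * s l)^Suc K \<le> \<tau>^Suc K" using h1 h0 by (rule power_mono)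
        have f1: "(1::real) \<le> fact (Suc K)" by (rule fact_ge_1)
        have nb: "0 \<le> norm ?b * norm (mat_pow A (Suc K) *v z)" by simp
        have "(\<tau> * s l)^Suc K / fact (Suc K) \<le> \<tau>^Suc K"
        proof -
          have "(\<tau> * s l)^Suc K / fact (Suc K) \<le> (\<tau> * s l)^Suc K / 1"
            by (rule divide_left_mono) (use f1 h0 in auto)
          then show ?thesis using p1 by simp
        qed
        then have "(\<tau> * s l)^Suc K / fact (Suc K) * (norm ?b * norm (mat_pow A (Suc K) *v z))
            \<le> \<tau>^Suc K * (norm ?b * norm (mat_pow A (Suc K) *v z))" using nb by (rule mult_right_mono)
        also have "\<dots> \<le> \<tau>^Suc K * (Cb * norm z)" using Cb tau by (intro mult_left_mono) auto
        finally show ?thesis .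
      qed
      moreover have "(\<Sum>i\<le>K. (?b \<bullet> (mat_pow A i *v x)) / fact i * (\<tau> * s l)^i) = (\<Sum>i\<le>K. c i * s l ^ i)"
        by (simp add: c_def power_mult_distrib mult.assoc)
      moreover have "\<bar>?b \<bullet> U A z (a + \<tau> * s l)\<bar> \<le> \<eta> * \<tau>^K * norm z" using bad l by auto
      ultimately show ?thesis using tb by (simp add: algebra_simps)
    qed
    have cb0: "\<bar>c k\<bar> \<le> 5^K / \<delta>^K * ((\<eta> * \<tau>^K + Cb * \<tau>^Suc K) * norm z)"
      by (rule sum_coeff_bound[OF dpos s(1) s(2) _ k]) (use poly in auto)
    also have "5^K / \<delta>^K * ((\<eta> * \<tau>^K + Cb * \<tau>^Suc K) * norm z) = D * \<tau>^K" by (simp add: D_def algebra_simps add_divide_distrib)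
    finally have cb: "\<bar>c k\<bar> \<le> D * \<tau>^K" .
    have D0: "0 \<le> D"
    proof -
      have "0 \<le> D * \<tau>^K" using cb by (meson abs_ge_zero order.trans)
      moreover have "0 < \<tau>^K" using tau by simp
      ultimately show ?thesis by (simp add: zero_le_mult_iff)
    qed
    from cb have "\<bar>?b \<bullet> (mat_pow A k *v x)\<bar> / fact k * \<tau>^k \<le> D * \<tau>^K"
      using tau by (simp add: c_def abs_mult)
    moreover have "D * \<tau>^K \<le> D * \<tau>^k"
    proof -
      note D0
      moreover have "\<tau>^K \<le> \<tau>^k" using tau k by (intro power_decreasing) auto
      ultimately show ?thesis by (rule mult_left_mono[rotated])
    qed
    ultimately have "\<bar>?b \<bullet> (mat_pow A k *v x)\<bar> / fact k * \<tau>^k \<le> D * \<tau>^k" by linarith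
    then have "\<bar>?b \<bullet> (mat_pow A k *v x)\<bar> / fact k \<le> D" by (rule mult_right_le_imp_le) (use tau in simp)
    then have "\<bar>?b \<bullet> (mat_pow A k *v x)\<bar> \<le> fact k * D" by (simp add: field_simps)
    also have "\<dots> \<le> fact K * D"
    proof -
      note D0
      moreover have "fact k \<le> (fact K :: real)" using k by (rule fact_mono)
      ultimately show ?thesis by (rule mult_right_mono[rotated])
    qed
    finally show ?thesis .
  qed
  have "Phi A B K x \<le> (\<Sum>k\<le>K. \<Sum>j\<in>(UNIV::'r set). fact K * D)"
    unfolding Phi_def by (intro sum_mono each) auto
  also have "\<dots> = real (Suc K) * real CARD('r) * (fact K * (5^K / \<delta>^K * (\<eta> + Cb * \<tau>))) * norm z"
    by (simp add: D_def algebra_simps)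
  also have "\<dots> < c0 * norm z" using ineq z by (intro mult_strict_right_mono) auto
  finally have "Phi A B K x < c0 * norm x" using nx by simp
  then show False using c0 by (meson not_le)
qed

lemma select_sparse:
  assumes "finite (S::nat set)" "card S \<ge> 2*K + 2"
  shows "\<exists>f. (\<forall>l\<le>K. f l \<in> S) \<and> (\<forall>l<K. f l + 2 \<le> f (Suc l))"
proof -
  define xs where "xs = sorted_list_of_set S"
  have len: "length xs = card S" by (simp add: xs_def)
  have sw: "sorted_wrt (<) xs" by (simp add: xs_def)
  have set: "set xs = S" using assms(1) by (simp add: xs_def)
  show ?thesis
  proof (intro exI[of _ "\<lambda>l. xs ! (2*l)"] conjI allI impI)
    fix l assume "l \<le> K"
    then have "2*l < length xs" using len assms(2) by linarith
    then show "xs ! (2*l) \<in> S" using set nth_mem by blast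
  next
    fix l assume l: "l < K"
    have a: "xs ! (2*l) < xs ! (2*l+1)" using sorted_wrt_nth_less[OF sw, of "2*l" "2*l+1"] l len assms(2) by auto
    have b: "xs ! (2*l+1) < xs ! (2*Suc l)" using sorted_wrt_nth_less[OF sw, of "2*l+1" "2*Suc l"] l len assms(2) by auto
    show "xs ! (2*l) + 2 \<le> xs ! (2*Suc l)" using a b by linarith
  qed
qed

lemma hsum: "(norm (transpose (B::real^'r^'n) *v v))^2 = (\<Sum>j\<in>UNIV. (column j B \<bullet> v)^2)"
proof -
  have "(transpose B *v v) $ j = column j B \<bullet> v" for j
    by (simp add: matrix_vector_mult_def transpose_def column_def inner_vec_def mult.commute)
  moreover have "(norm (transpose B *v v))^2 = (\<Sum>j\<in>UNIV. ((transpose B *v v) $ j)^2)"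
    by (subst power2_norm_eq_inner) (simp only: inner_vec_def inner_real_def power2_eq_square)
  ultimately show ?thesis by simp
qed

lemma cover:
  assumes "0 < T" "0 < M" "0 \<le> t" "t \<le> T"
  shows "\<exists>i<M. T * real i / real M \<le> t \<and> t \<le> T * real (Suc i) / real M"
proof (cases "t < T")
  case True
  define i where "i = nat \<lfloor>t * M / T\<rfloor>"
  have q0: "0 \<le> t * M / T" using assms by simp
  have q1: "t * M / T < M" using True assms by (simp add: field_simps)
  have fi: "real i \<le> t * M / T" "t * M / T < real i + 1"
    using q0 by (simp_all add: i_def)
  have "i < M" using fi q1 by linarith
  moreover have "T * real i / real M \<le> t" using fi(1) assms by (simp add: field_simps)
  moreover have "t \<le> T * real (Suc i) / real M" using fi(2) assms by (simp add: field_simps)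
  ultimately show ?thesis by blast
next
  case False
  then have "t = T" using assms by simp
  then show ?thesis using assms
    by (intro exI[of _ "M - 1"]) (auto simp: field_simps of_nat_diff)
qed

lemma sets_Icc: "{a..b::real} \<in> sets lebesgue" by simp

lemma count_bad:
  fixes A :: "real^'n^'n" and B :: "real^'r^'n" and z :: "real^'n"
  assumes skew: "transpose A = - A"
    and c0: "\<forall>x. c0 * norm x \<le> Phi A B K x"
    and Cb: "\<forall>j v. norm (column j B) * norm (mat_pow A (Suc K) *v v) \<le> Cb * norm v"
    and P: "1 \<le> P"
    and tau: "0 < \<tau>" "\<tau> \<le> 1"
    and ineq: "real (Suc K) * real CARD('r) * (fact K * (5^K / (1 / real P)^K * (\<eta> + Cb * \<tau>))) < c0"
    and z: "z \<noteq> 0"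
  shows "card {p\<in>{..<P}. \<exists>s\<in>{real p / real P .. real (Suc p) / real P}.
            \<forall>j. \<bar>column j B \<bullet> U A z (a + \<tau> * s)\<bar> \<le> \<eta> * \<tau>^K * norm z} \<le> 2*K + 1"
    (is "card ?S \<le> _")
proof (rule ccontr)
  assume "\<not> ?thesis"
  then have "card ?S \<ge> 2*K + 2" by simp
  then obtain f where f: "\<forall>l\<le>K. f l \<in> ?S" "\<forall>l<K. f l + 2 \<le> f (Suc l)"
    using select_sparse[of ?S K] by auto
  define s where "s l = (SOME s. s \<in> {real (f l) / real P .. real (Suc (f l)) / real P} \<and>
      (\<forall>j. \<bar>column j B \<bullet> U A z (a + \<tau> * s)\<bar> \<le> \<eta> * \<tau>^K * norm z))" for l
  have sl: "s l \<in> {real (f l) / real P .. real (Suc (f l)) / real P} \<and>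
      (\<forall>j. \<bar>column j B \<bullet> U A z (a + \<tau> * s l)\<bar> \<le> \<eta> * \<tau>^K * norm z)" if "l \<le> K" for l
    unfolding s_def by (rule someI_ex) (use f(1) that in blast)
  have Pp: "real P > 0" using P by simp
  show False
  proof (rule local_bad[OF skew c0 Cb _ _ tau _ z])
    show "0 < 1 / real P" using Pp by simp
    show "1 / real P \<le> 1" using P by simp
    show "real (Suc K) * real CARD('r) * (fact K * (5^K / (1 / real P)^K * (\<eta> + Cb * \<tau>))) < c0" by (rule ineq)
    show "\<forall>l\<le>K. 0 \<le> s l \<and> s l \<le> 1"
    proof (intro allI impI)
      fix l assume l: "l \<le> K"
      have "f l < P" using f(1) l by auto
      then have "real (Suc (f l)) / real P \<le> 1" using Pp by (simp add: divide_le_eq)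
      moreover have "s l \<le> real (Suc (f l)) / real P" "real (f l) / real P \<le> s l" using sl[OF l] by auto
      moreover have "0 \<le> real (f l) / real P" using Pp by simp
      ultimately show "0 \<le> s l \<and> s l \<le> 1" by linarith
    qed
    show "\<forall>l<K. s l + 1 / real P \<le> s (Suc l)"
    proof (intro allI impI)
      fix l assume l: "l < K"
      have a: "s l \<le> real (Suc (f l)) / real P" using sl[of l] l by auto
      have b: "real (f (Suc l)) / real P \<le> s (Suc l)" using sl[of "Suc l"] l by auto
      have c: "real (Suc (f l)) + 1 \<le> real (f (Suc l))" using f(2) l by auto
      have "s l + 1 / real P \<le> (real (Suc (f l)) + 1) / real P" using a by (simp add: add_divide_distrib)
      also have "\<dots> \<le> real (f (Suc l)) / real P" using c Pp by (simp add: divide_right_mono)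
      finally show "s l + 1 / real P \<le> s (Suc l)" using b by linarith
    qed
    show "\<forall>l\<le>K. \<forall>j. \<bar>column j B \<bullet> U A z (a + \<tau> * s l)\<bar> \<le> \<eta> * \<tau>^K * norm z"
      using sl by blast
  qed
qed

lemma core_bound:
  fixes A :: "real^'n^'n" and B :: "real^'r^'n" and z :: "real^'n"
  assumes skew: "transpose A = - A"
    and c0: "\<forall>x. c0 * norm x \<le> Phi A B K x"
    and Cb: "\<forall>j v. norm (column j B) * norm (mat_pow A (Suc K) *v v) \<le> Cb * norm v"
    and P: "1 \<le> P" and n0: "1 \<le> n0" and eta: "0 \<le> \<eta>"
    and ineq: "\<And>\<tau>. 0 < \<tau> \<Longrightarrow> \<tau> \<le> 1 / real n0 \<Longrightarrow>
        real (Suc K) * real CARD('r) * (fact K * (5^K / (1 / real P)^K * (\<eta> + Cb * \<tau>))) < c0"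
    and Prho: "real (2*K+1) / real P \<le> \<rho> / 2"
    and T: "0 < T" "T \<le> 1"
    and alpha: "Linf01 T \<alpha>" "integral {0..T} \<alpha> \<ge> \<rho> * T"
  shows "(\<eta> * (T / real n0)^K * norm z)^2 * (\<rho> * T / 2)
     \<le> integral {0..T} (\<lambda>t. \<alpha> t * (norm (transpose B *v (mat_exp (t *\<^sub>R A) *v z)))\<^sup>2)"
proof -
  define \<tau> where "\<tau> = T / real n0"
  have n0p: "real n0 > 0" using n0 by simp
  have Pp: "real P > 0" using P by simp
  have tau: "0 < \<tau>" "\<tau> \<le> 1 / real n0" "\<tau> \<le> 1"
    using T n0p n0 by (auto simp: \<tau>_def divide_right_mono field_simps)
  define M where "M = n0 * P"
  have Mp: "0 < M" using n0 P by (simp add: M_def)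
  define L where "L = (\<eta> * \<tau>^K * norm z)^2"
  have L0: "0 \<le> L" by (simp add: L_def)
  define h where "h t = (\<Sum>j\<in>UNIV. (column j B \<bullet> U A z t)^2)" for t
  have integrand: "\<alpha> t * (norm (transpose B *v (mat_exp (t *\<^sub>R A) *v z)))\<^sup>2 = \<alpha> t * h t" for t
    unfolding mat_exp_U hsum h_def ..
  define I where "I i = {T * real i / real M .. T * real (Suc i) / real M}" for i
  define Bad where "Bad = {i\<in>{..<M}. \<exists>t\<in>I i. h t < L}"
  have finBad: "finite Bad" by (simp add: Bad_def)
  define Sb where "Sb b = {p\<in>{..<P}. \<exists>s\<in>{real p / real P .. real (Suc p) / real P}.
            \<forall>j. \<bar>column j B \<bullet> U A z (real b * \<tau> + \<tau> * s)\<bar> \<le> \<eta> * \<tau>^K * norm z}" for b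
  have cardBad: "card Bad \<le> n0 * (2*K+1)"
  proof (cases "z = 0")
    case True
    then have "Bad = {}" using L0 by (auto simp: Bad_def h_def L_def U_def)
    then show ?thesis by simp
  next
    case False
    have cSb: "card (Sb b) \<le> 2*K+1" for b
      unfolding Sb_def
      by (rule count_bad[OF skew c0 Cb P tau(1,3) ineq[OF tau(1,2)] False])
    have sub: "Bad \<subseteq> (\<Union>b\<in>{..<n0}. (\<lambda>p. b * P + p) ` Sb b)"
    proof
      fix i assume i: "i \<in> Bad"
      then obtain t where it: "i < M" "t \<in> I i" "h t < L" by (auto simp: Bad_def)
      define b where "b = i div P"
      define p where "p = i mod P"
      have ibp: "i = b * P + p" by (simp add: b_def p_def)
      have bn: "b < n0" using it(1) P by (simp add: b_def M_def less_mult_imp_div_less)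
      have pP: "p < P" using P by (simp add: p_def)
      define s where "s = (t - real b * \<tau>) / \<tau>"
      have ts: "t = real b * \<tau> + \<tau> * s" using tau by (simp add: s_def)
      have TM: "T / real M = \<tau> / real P" by (simp add: \<tau>_def M_def)
      have ri: "real i = real b * real P + real p" by (simp add: ibp)
      have lo: "T * real i / real M = real b * \<tau> + \<tau> * (real p / real P)"
      proof -
        have "T * real i / real M = (T / real M) * real i" by simp
        also have "\<dots> = \<tau> / real P * (real b * real P + real p)" using TM ri by simp
        also have "\<dots> = real b * \<tau> + \<tau> * (real p / real P)" using Pp by (simp add: field_simps)
        finally show ?thesis .
      qed
      have hi: "T * real (Suc i) / real M = real b * \<tau> + \<tau> * (real (Suc p) / real P)"
      proof -
        have "T * real (Suc i) / real M = (T / real M) * (real i + 1)" by simp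
        also have "\<dots> = \<tau> / real P * (real b * real P + real p + 1)" using TM ri by simp
        also have "\<dots> = real b * \<tau> + \<tau> * (real (Suc p) / real P)" using Pp by (simp add: field_simps)
        finally show ?thesis .
      qed
      have s1: "real p / real P \<le> s"
      proof -
        have "real b * \<tau> + \<tau> * (real p / real P) \<le> real b * \<tau> + \<tau> * s" using it(2) lo ts by (simp add: I_def)
        then have "\<tau> * (real p / real P) \<le> \<tau> * s" by linarith
        then show ?thesis using tau(1) by (rule mult_left_le_imp_le)
      qed
      have s2: "s \<le> real (Suc p) / real P"
      proof -
        have "real b * \<tau> + \<tau> * s \<le> real b * \<tau> + \<tau> * (real (Suc p) / real P)" using it(2) hi ts by (simp add: I_def)
        then have "\<tau> * s \<le> \<tau> * (real (Suc p) / real P)" by linarith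
        then show ?thesis using tau(1) by (rule mult_left_le_imp_le)
      qed
      have bnd: "\<bar>column j B \<bullet> U A z (real b * \<tau> + \<tau> * s)\<bar> \<le> \<eta> * \<tau>^K * norm z" for j
      proof -
        have "(column j B \<bullet> U A z t)^2 \<le> h t"
          unfolding h_def by (rule member_le_sum) auto
        then have "(column j B \<bullet> U A z t)^2 \<le> (\<eta> * \<tau>^K * norm z)^2" using it(3) by (simp add: L_def)
        then have "\<bar>column j B \<bullet> U A z t\<bar> \<le> \<bar>\<eta> * \<tau>^K * norm z\<bar>" by (simp add: abs_le_square_iff)
        then show ?thesis using eta tau ts by simp
      qed
      have "s \<in> {real p / real P .. real (Suc p) / real P}" using s1 s2 by simp
      then have "p \<in> Sb b" unfolding Sb_def using pP bnd by blast
      then show "i \<in> (\<Union>b\<in>{..<n0}. (\<lambda>p. b * P + p) ` Sb b)" using bn ibp by blast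
    qed
    have finSb: "finite (Sb b)" for b by (simp add: Sb_def)
    have "card Bad \<le> card (\<Union>b\<in>{..<n0}. (\<lambda>p. b * P + p) ` Sb b)"
      by (rule card_mono) (auto simp: finSb sub)
    also have "\<dots> \<le> (\<Sum>b\<in>{..<n0}. card ((\<lambda>p. b * P + p) ` Sb b))" by (rule card_UN_le) simp
    also have "\<dots> \<le> (\<Sum>b\<in>{..<n0}. 2*K+1)"
      by (intro sum_mono order.trans[OF card_image_le[OF finSb] cSb])
    finally show ?thesis by simp
  qed
  define S where "S = {0..T}"
  have Sl: "S \<in> sets lebesgue" by (simp add: S_def)
  have a01: "0 \<le> \<alpha> t \<and> \<alpha> t \<le> 1" if "t \<in> S" for t
    using alpha(1) that by (auto simp: Linf01_def S_def)
  have am: "\<alpha> \<in> borel_measurable (lebesgue_on S)"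
    using alpha(1) Sl by (simp add: Linf01_def S_def measurable_on_iff_borel_measurable)
  have aint: "\<alpha> integrable_on S"
    by (rule measurable_bounded_by_integrable_imp_integrable_real[OF am _ _ Sl, where g="\<lambda>_. 1"])
       (use a01 in \<open>auto simp: S_def\<close>)
  have hc: "continuous_on S h"
  proof -
    have "isCont (\<lambda>t. column j B \<bullet> U A z t) t" for j t
      by (rule DERIV_isCont[OF U_inner_deriv])
    then have "continuous_on S (\<lambda>t. column j B \<bullet> U A z t)" for j
      by (simp add: continuous_at_imp_continuous_on)
    then show ?thesis unfolding h_def by (intro continuous_on_sum continuous_on_power) blast
  qed
  have hm: "h \<in> borel_measurable (lebesgue_on S)"
    by (rule continuous_imp_measurable_on_sets_lebesgue[OF hc Sl])
  define Hb where "Hb = (\<Sum>j\<in>UNIV. (norm (column j B) * norm z)^2)"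
  have hb: "0 \<le> h t \<and> h t \<le> Hb" for t
  proof -
    have "(column j B \<bullet> U A z t)^2 \<le> (norm (column j B) * norm z)^2" for j
    proof -
      have "\<bar>column j B \<bullet> U A z t\<bar> \<le> norm (column j B) * norm (U A z t)" by (rule Cauchy_Schwarz_ineq2)
      then have "\<bar>column j B \<bullet> U A z t\<bar> \<le> \<bar>norm (column j B) * norm z\<bar>" by (simp add: U_norm[OF skew])
      then show ?thesis using abs_le_square_iff by blast
    qed
    then show ?thesis unfolding h_def Hb_def by (auto intro: sum_mono sum_nonneg)
  qed
  have Fb: "\<bar>\<alpha> t * h t\<bar> \<le> Hb" if "t \<in> S" for t
  proof -
    have "\<alpha> t * h t \<le> 1 * h t" using a01[OF that] hb[of t] by (intro mult_right_mono) auto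
    moreover have "0 \<le> \<alpha> t * h t" using a01[OF that] hb[of t] by simp
    ultimately show ?thesis using hb[of t] by simp
  qed
  have Fint: "(\<lambda>t. \<alpha> t * h t) integrable_on S"
    by (rule measurable_bounded_by_integrable_imp_integrable_real[OF borel_measurable_times[OF am hm] _ Fb Sl])
       (simp add: S_def Henstock_Kurzweil_Integration.integrable_const_ivl)
  define chi where "chi t = (\<Sum>i\<in>Bad. if t \<in> I i then (1::real) else 0)" for t
  have Isub: "I i \<inter> S = I i" if "i < M" for i
  proof -
    have "0 \<le> T * real i / real M" using T by simp
    moreover have "T * real (Suc i) / real M \<le> T"
    proof -
      have "real (Suc i) \<le> real M" using that by simp
      then have "T * real (Suc i) \<le> T * real M" using T by (intro mult_left_mono) auto
      then show ?thesis using Mp by (simp add: divide_le_eq)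
    qed
    ultimately show ?thesis by (auto simp: I_def S_def)
  qed
  have ind_int: "(\<lambda>t. if t \<in> I i then (1::real) else 0) integrable_on S" for i
    unfolding integrable_restrict_Int I_def S_def Int_atLeastAtMost
    by (rule Henstock_Kurzweil_Integration.integrable_const_ivl)
  have chi_int: "chi integrable_on S" unfolding chi_def
    by (rule integrable_sum[OF finBad]) (rule ind_int)
  have ind_val: "integral S (\<lambda>t. if t \<in> I i then (1::real) else 0) = T / real M" if "i < M" for i
  proof -
    have "integral S (\<lambda>t. if t \<in> I i then (1::real) else 0) = integral (I i) (\<lambda>_. 1)"
      by (simp add: integral_restrict_Int Isub[OF that])
    also have "\<dots> = T * real (Suc i) / real M - T * real i / real M"
      using T by (simp add: I_def divide_right_mono)
    also have "\<dots> = T / real M" by (simp add: diff_divide_distrib[symmetric] algebra_simps)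
    finally show ?thesis .
  qed
  have chi_val: "integral S chi = real (card Bad) * (T / real M)"
  proof -
    have "integral S chi = (\<Sum>i\<in>Bad. integral S (\<lambda>t. if t \<in> I i then (1::real) else 0))"
      unfolding chi_def by (rule Henstock_Kurzweil_Integration.integral_sum[OF finBad]) (rule ind_int)
    also have "\<dots> = (\<Sum>i\<in>Bad. T / real M)" by (intro sum.cong) (auto simp: Bad_def ind_val)
    finally show ?thesis by simp
  qed
  have pw: "L * \<alpha> t - L * chi t \<le> \<alpha> t * h t" if t: "t \<in> S" for t
  proof (cases "\<exists>i\<in>Bad. t \<in> I i")
    case True
    then obtain i where i: "i \<in> Bad" "t \<in> I i" by blast
    have "1 \<le> chi t"
    proof -
      have "(if t \<in> I i then (1::real) else 0) \<le> chi t"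
        unfolding chi_def by (rule member_le_sum[OF i(1) _ finBad]) auto
      then show ?thesis using i by simp
    qed
    then have "L * \<alpha> t - L * chi t \<le> 0"
      using a01[OF t] L0 by (smt (verit) mult_left_mono)
    also have "0 \<le> \<alpha> t * h t" using a01[OF t] hb by simp
    finally show ?thesis .
  next
    case False
    obtain i where i: "i < M" "t \<in> I i"
      using cover[OF T(1) Mp, of t] t by (auto simp: S_def I_def)
    have "i \<notin> Bad" using False i by blast
    then have "L \<le> h t" using i by (auto simp: Bad_def not_less)
    then have "L * \<alpha> t \<le> h t * \<alpha> t" using a01[OF t] by (intro mult_right_mono) auto
    then have "L * \<alpha> t \<le> \<alpha> t * h t" by (simp only: mult.commute)
    moreover have "0 \<le> chi t" unfolding chi_def by (rule sum_nonneg) auto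
    ultimately show ?thesis using L0 by (smt (verit) mult_nonneg_nonneg)
  qed
  have aL: "(\<lambda>x. L * \<alpha> x) integrable_on S" using integrable_on_cmult_left[OF aint, of L] by simp
  have cL: "(\<lambda>x. L * chi x) integrable_on S" using integrable_on_cmult_left[OF chi_int, of L] by simp
  have "integral S (\<lambda>t. L * \<alpha> t - L * chi t) \<le> integral S (\<lambda>t. \<alpha> t * h t)"
    by (rule integral_le[OF integrable_diff[OF aL cL] Fint pw])
  moreover have "integral S (\<lambda>t. L * \<alpha> t - L * chi t) = L * integral S \<alpha> - L * integral S chi"
    by (simp add: Henstock_Kurzweil_Integration.integral_diff[OF aL cL])
  moreover have "L * (\<rho> * T / 2) \<le> L * integral S \<alpha> - L * integral S chi"
  proof -
    have "integral S chi \<le> real (n0 * (2*K+1)) * (T / real M)"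
    proof -
      have "real (card Bad) \<le> real (n0 * (2*K+1))" using cardBad by (simp only: of_nat_le_iff)
      then show ?thesis unfolding chi_val using T Mp by (intro mult_right_mono) auto
    qed
    also have "\<dots> = real (2*K+1) / real P * T" using n0p Pp by (simp add: M_def field_simps)
    also have "\<dots> \<le> \<rho> / 2 * T" using Prho T by (intro mult_right_mono) auto
    finally have "integral S chi \<le> \<rho> / 2 * T" .
    then have "\<rho> * T / 2 \<le> integral S \<alpha> - integral S chi" using alpha(2) by (simp add: S_def)
    from mult_left_mono[OF this L0] show ?thesis by (simp add: right_diff_distrib)
  qed
  ultimately have "L * (\<rho> * T / 2) \<le> integral S (\<lambda>t. \<alpha> t * h t)" by linarith
  then show ?thesis unfolding integrand L_def \<tau>_def S_def .
qed

theorem proposition5p1: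
  fixes A :: "real^'n^'n" and B :: "real^'r^'n" and \<rho> :: real
  assumes skew: "transpose A = - A"
    and ctrl: "controllable A B"
    and rho: "\<rho> > 0"
  shows "\<exists>\<kappa>>0. \<forall>T \<alpha>. 0 < T \<and> T \<le> 1 \<and> Linf01 T \<alpha> \<and> integral {0..T} \<alpha> \<ge> \<rho> * T \<longrightarrow>
           class_K A B T (\<kappa> * T ^ (2 * Kalman_index A B + 1)) \<alpha>"
proof -
  define K where "K = Kalman_index A B"
  obtain c0 where c0: "c0 > 0" "\<forall>x. c0 * norm x \<le> Phi A B K x"
    using Phi_lower[OF skew ctrl] unfolding K_def by blast
  obtain nA where nA: "nA > 0" "\<forall>v. norm (A *v v) \<le> norm v * nA" using mat_norm_bound by blast
  define nb where "nb = (\<Sum>j\<in>UNIV. norm (column j B))"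
  define Cb where "Cb = nb * nA^(Suc K)"
  have Cb0: "0 \<le> Cb" using nA by (simp add: Cb_def nb_def sum_nonneg)
  have Cb: "\<forall>j v. norm (column j B) * norm (mat_pow A (Suc K) *v v) \<le> Cb * norm v"
  proof (intro allI)
    fix j v
    have "norm (column j B) \<le> nb" unfolding nb_def by (rule member_le_sum) auto
    moreover have "norm (mat_pow A (Suc K) *v v) \<le> nA^(Suc K) * norm v"
      using mat_pow_v_bound[OF nA(2), of "Suc K" v] nA(1) by (simp del: power_Suc)
    ultimately have "norm (column j B) * norm (mat_pow A (Suc K) *v v) \<le> nb * (nA^(Suc K) * norm v)"
      by (intro mult_mono) (auto simp: nb_def sum_nonneg)
    then show "norm (column j B) * norm (mat_pow A (Suc K) *v v) \<le> Cb * norm v" by (simp add: Cb_def mult.assoc)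
  qed
  define P where "P = nat \<lceil>2 * (2 * real K + 1) / \<rho>\<rceil> + 1"
  have P1: "1 \<le> P" by (simp add: P_def)
  have Pge: "2 * (2 * real K + 1) / \<rho> \<le> real P"
  proof -
    have "2 * (2 * real K + 1) / \<rho> \<le> real (nat \<lceil>2 * (2 * real K + 1) / \<rho>\<rceil>)" by linarith
    then show ?thesis by (simp add: P_def)
  qed
  have Prho: "real (2*K+1) / real P \<le> \<rho> / 2"
  proof -
    have "2 * (2 * real K + 1) \<le> \<rho> * real P" using Pge rho by (simp add: divide_le_eq mult.commute)
    then show ?thesis using P1 by (simp add: divide_le_eq field_simps)
  qed
  define E where "E = real (Suc K) * real CARD('r) * (fact K * (5^K / (1 / real P)^K))"
  have E0: "E > 0" using P1 by (simp add: E_def)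
  define \<eta> where "\<eta> = c0 / (4 * E)"
  have eta0: "\<eta> > 0" using c0 E0 by (simp add: \<eta>_def)
  define \<tau>0 where "\<tau>0 = min 1 (c0 / (4 * E * (Cb + 1)))"
  have tau0: "0 < \<tau>0" "\<tau>0 \<le> 1" "\<tau>0 \<le> c0 / (4 * E * (Cb + 1))"
    using c0 E0 Cb0 by (auto simp: \<tau>0_def)
  define n0 where "n0 = nat \<lceil>1 / \<tau>0\<rceil>"
  have n0ge: "1 / \<tau>0 \<le> real n0" unfolding n0_def by linarith
  have n01: "1 \<le> n0"
  proof -
    have "1 \<le> 1 / \<tau>0" using tau0 by (simp add: le_divide_eq)
    then show ?thesis using n0ge by linarith
  qed
  have n0tau: "1 / real n0 \<le> \<tau>0"
    using n0ge tau0(1) n01 by (simp add: divide_le_eq field_simps)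
  have ineq: "real (Suc K) * real CARD('r) * (fact K * (5^K / (1 / real P)^K * (\<eta> + Cb * \<tau>))) < c0"
    if t: "0 < \<tau>" "\<tau> \<le> 1 / real n0" for \<tau>
  proof -
    have eq: "real (Suc K) * real CARD('r) * (fact K * (5^K / (1 / real P)^K * (\<eta> + Cb * \<tau>))) = E * \<eta> + E * Cb * \<tau>"
    proof -
      have gen: "\<And>a b c d x y u::real. a * b * (c * (d * (x + y * u))) = a * b * (c * d) * x + a * b * (c * d) * y * u"
        by (simp add: algebra_simps)
      show ?thesis unfolding E_def by (rule gen)
    qed
    have a: "E * \<eta> = c0 / 4" using E0 by (simp add: \<eta>_def)
    have "\<tau> \<le> c0 / (4 * E * (Cb + 1))" using t n0tau tau0 by linarith
    then have "E * Cb * \<tau> \<le> E * Cb * (c0 / (4 * E * (Cb + 1)))" using E0 Cb0 by (intro mult_left_mono) auto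
    also have "\<dots> = c0 / 4 * (Cb / (Cb + 1))"
    proof -
      have ne1: "E \<noteq> 0" using E0 by simp
      have ne2: "Cb + 1 \<noteq> 0" using Cb0 by simp
      show ?thesis using ne1 ne2 by (simp add: divide_simps)
    qed
    also have "\<dots> < c0 / 4 * 1" using c0 Cb0 by (intro mult_strict_left_mono) auto
    finally show ?thesis unfolding eq a using c0 by linarith
  qed
  define \<kappa> where "\<kappa> = \<eta>^2 / real n0 ^ (2*K) * (\<rho> / 2)"
  have kpos: "\<kappa> > 0" using eta0 n01 rho by (simp add: \<kappa>_def)
  show ?thesis
  proof (intro exI[of _ \<kappa>] conjI kpos allI impI)
    fix T \<alpha> assume H: "0 < T \<and> T \<le> 1 \<and> Linf01 T \<alpha> \<and> \<rho> * T \<le> integral {0..T} \<alpha>"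
    show "class_K A B T (\<kappa> * T ^ (2 * Kalman_index A B + 1)) \<alpha>"
      unfolding class_K_def
    proof (intro conjI allI)
      show "Linf01 T \<alpha>" using H by blast
      fix z :: "real^'n"
      have cb: "(\<eta> * (T / real n0)^K * norm z)^2 * (\<rho> * T / 2)
         \<le> integral {0..T} (\<lambda>t. \<alpha> t * (norm (transpose B *v (mat_exp (t *\<^sub>R A) *v z)))\<^sup>2)"
        by (rule core_bound[OF skew c0(2) Cb P1 n01 less_imp_le[OF eta0] ineq Prho]) (use H in auto)
      have eqn: "(\<eta> * (T / real n0)^K * norm z)^2 * (\<rho> * T / 2) = \<kappa> * T ^ (2 * K + 1) * (norm z)\<^sup>2"
        by (simp add: \<kappa>_def power_mult_distrib power_divide power_mult[symmetric] field_simps)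
      have fin: "\<kappa> * T ^ (2 * K + 1) * (norm z)\<^sup>2
         \<le> integral {0..T} (\<lambda>t. \<alpha> t * (norm (transpose B *v (mat_exp (t *\<^sub>R A) *v z)))\<^sup>2)"
        using eqn cb by linarith
      then show "\<kappa> * T ^ (2 * Kalman_index A B + 1) * (norm z)\<^sup>2
         \<le> integral {0..T} (\<lambda>t. \<alpha> t * (norm (transpose B *v (mat_exp (t *\<^sub>R A) *v z)))\<^sup>2)"
        by (simp only: K_def)
    qed
  qed
qed

end
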